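(* For every $g\in\mathrm{Sp}(2,1)$, the set of traces of the elements of $g\,(1\oplus\mathrm{Sp}(1,1))\,g^{-1}$ is not contained in $\mathbb R$.
   Context: $\mathbb H$ denotes the quaternions. $\mathrm{Sp}(n,1)=\{A\in\mathrm{GL}(n+1,\mathbb H): A^*I_{n,1}A=I_{n,1}\}$ with $A^*$ the conjugate transpose and $I_{n,1}=\mathrm{diag}(1,\dots,1,-1)$. $1\oplus\mathrm{Sp}(1,1)$ is the subgroup of $\mathrm{Sp}(2,1)$ of block diagonal matrices with $1$ in the upper left entry and an element of $\mathrm{Sp}(1,1)$ in the lower right $2\times 2$ block. The trace of a quaternionic matrix is the sum of its diagonal entries. *)

theory Defs
  imports Complex_Main
begin

datatype quat = Quat (qre: real) (qi: real) (qj: real) (qk: real)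

lemma quat_eq_iff: "x = y \<longleftrightarrow> qre x = qre y \<and> qi x = qi y \<and> qj x = qj y \<and> qk x = qk y"
  by (cases x; cases y) auto

instantiation quat :: ring_1
begin
definition "0 = Quat 0 0 0 0"
definition "1 = Quat 1 0 0 0"
definition "x + y = Quat (qre x + qre y) (qi x + qi y) (qj x + qj y) (qk x + qk y)"
definition "x - y = Quat (qre x - qre y) (qi x - qi y) (qj x - qj y) (qk x - qk y)"
definition "- x = Quat (- qre x) (- qi x) (- qj x) (- qk x)"
definition "x * y = Quat
   (qre x * qre y - qi x * qi y - qj x * qj y - qk x * qk y)
   (qre x * qi y + qi x * qre y + qj x * qk y - qk x * qj y)
   (qre x * qj y - qi x * qk y + qj x * qre y + qk x * qi y)
   (qre x * qk y + qi x * qj y - qj x * qi y + qk x * qre y)"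
instance
  by standard (auto simp: quat_eq_iff zero_quat_def one_quat_def plus_quat_def minus_quat_def
                 uminus_quat_def times_quat_def algebra_simps)
end

definition qcnj :: "quat \<Rightarrow> quat" where
  "qcnj x = Quat (qre x) (- qi x) (- qj x) (- qk x)"

definition quat_of_real :: "real \<Rightarrow> quat" where
  "quat_of_real r = Quat r 0 0 0"

text \<open>An m x m quaternionic matrix is represented as a function nat => nat => quat
  whose entries vanish outside the index range {0..<m} x {0..<m}.\<close>

type_synonym qmatrix = "nat \<Rightarrow> nat \<Rightarrow> quat"

definition qmats :: "nat \<Rightarrow> qmatrix set" where
  "qmats m = {A. \<forall>i j. (m \<le> i \<or> m \<le> j) \<longrightarrow> A i j = 0}"

definition qmat_mult :: "nat \<Rightarrow> qmatrix \<Rightarrow> qmatrix \<Rightarrow> qmatrix" where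
  "qmat_mult m A B = (\<lambda>i j. if i < m \<and> j < m then (\<Sum>k<m. A i k * B k j) else 0)"

definition qmat_id :: "nat \<Rightarrow> qmatrix" where
  "qmat_id m = (\<lambda>i j. if i < m \<and> i = j then 1 else 0)"

definition qmat_ct :: "qmatrix \<Rightarrow> qmatrix" where
  "qmat_ct A = (\<lambda>i j. qcnj (A j i))"

definition qtrace :: "nat \<Rightarrow> qmatrix \<Rightarrow> quat" where
  "qtrace m A = (\<Sum>i<m. A i i)"

definition qGL :: "nat \<Rightarrow> qmatrix set" where
  "qGL m = {A \<in> qmats m. \<exists>B \<in> qmats m. qmat_mult m A B = qmat_id m \<and> qmat_mult m B A = qmat_id m}"

definition qmat_inv :: "nat \<Rightarrow> qmatrix \<Rightarrow> qmatrix" where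
  "qmat_inv m A = (SOME B. B \<in> qmats m \<and> qmat_mult m A B = qmat_id m \<and> qmat_mult m B A = qmat_id m)"

definition I_n1 :: "nat \<Rightarrow> qmatrix" where
  "I_n1 n = (\<lambda>i j. if i = j \<and> i < n then 1 else if i = j \<and> i = n then - 1 else 0)"

definition Sp_n1 :: "nat \<Rightarrow> qmatrix set" where
  "Sp_n1 n = {A \<in> qGL (n + 1). qmat_mult (n + 1) (qmat_ct A) (qmat_mult (n + 1) (I_n1 n) A) = I_n1 n}"

definition one_plus_Sp11 :: "qmatrix set" where
  "one_plus_Sp11 = {(\<lambda>i j. if i = 0 \<and> j = 0 then 1
                           else if 1 \<le> i \<and> 1 \<le> j then B (i - 1) (j - 1) else 0) | B. B \<in> Sp_n1 1}"

end

theory Submission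
  imports Defs
begin

lemma quat_sel [simp]:
  "qre 0 = 0" "qi 0 = 0" "qj 0 = 0" "qk 0 = 0"
  "qre 1 = 1" "qi 1 = 0" "qj 1 = 0" "qk 1 = 0"
  "qre (x + y) = qre x + qre y" "qi (x + y) = qi x + qi y" "qj (x + y) = qj x + qj y" "qk (x + y) = qk x + qk y"
  "qre (x - y) = qre x - qre y" "qi (x - y) = qi x - qi y" "qj (x - y) = qj x - qj y" "qk (x - y) = qk x - qk y"
  "qre (- x) = - qre x" "qi (- x) = - qi x" "qj (- x) = - qj x" "qk (- x) = - qk x"
  "qre (x * y) = qre x * qre y - qi x * qi y - qj x * qj y - qk x * qk y"
  "qi (x * y) = qre x * qi y + qi x * qre y + qj x * qk y - qk x * qj y"
  "qj (x * y) = qre x * qj y - qi x * qk y + qj x * qre y + qk x * qi y"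
  "qk (x * y) = qre x * qk y + qi x * qj y - qj x * qi y + qk x * qre y"
  "qre (qcnj x) = qre x" "qi (qcnj x) = - qi x" "qj (qcnj x) = - qj x" "qk (qcnj x) = - qk x"
  by (simp_all add: zero_quat_def one_quat_def plus_quat_def minus_quat_def uminus_quat_def
      times_quat_def qcnj_def)

lemma sum3: "(\<Sum>i<(3::nat). f i) = f 0 + f 1 + f 2"
  by (simp add: eval_nat_numeral)
lemma sum2: "(\<Sum>i<(2::nat). f i) = f 0 + f 1"
  by (simp add: numeral_2_eq_2)

lemma qmat_mult_assoc:
  "qmat_mult m (qmat_mult m A B) C = qmat_mult m A (qmat_mult m B C)"
  unfolding qmat_mult_def
  by (auto intro!: ext simp: sum_distrib_left sum_distrib_right mult.assoc intro: sum.swap)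

lemma qmat_mult_id_left: "A \<in> qmats m \<Longrightarrow> qmat_mult m (qmat_id m) A = A"
  unfolding qmat_mult_def qmat_id_def qmats_def
  by (auto intro!: ext simp: if_distrib[of "\<lambda>x. x * _"] cong: if_cong)

lemma qmat_mult_id_right: "A \<in> qmats m \<Longrightarrow> qmat_mult m A (qmat_id m) = A"
  unfolding qmat_mult_def qmat_id_def qmats_def
  by (auto intro!: ext simp: if_distrib[of "\<lambda>x. _ * x"] cong: if_cong)

lemma qmat_mult_qmats: "qmat_mult m A B \<in> qmats m"
  unfolding qmat_mult_def qmats_def by auto

lemma less3: "(i::nat) < 3 \<longleftrightarrow> i = 0 \<or> i = 1 \<or> i = 2" by auto
lemma less2: "(i::nat) < 2 \<longleftrightarrow> i = 0 \<or> i = 1" by auto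

definition Bq :: "quat \<Rightarrow> qmatrix" where
  "Bq q = (\<lambda>i j. if i = 0 \<and> j = 0 then q else if i = 1 \<and> j = 1 then 1 else 0)"

lemma Bq_Sp:
  assumes "q * qcnj q = 1" "qcnj q * q = 1"
  shows "Bq q \<in> Sp_n1 1"
proof -
  have m: "Bq p \<in> qmats 2" for p unfolding Bq_def qmats_def by auto
  have 1: "qmat_mult 2 (Bq q) (Bq (qcnj q)) = qmat_id 2"
    unfolding qmat_mult_def qmat_id_def Bq_def using assms by (auto intro!: ext simp: sum2 less2)
  have 2: "qmat_mult 2 (Bq (qcnj q)) (Bq q) = qmat_id 2"
    unfolding qmat_mult_def qmat_id_def Bq_def using assms by (auto intro!: ext simp: sum2 less2)
  have 3: "qmat_mult 2 (qmat_ct (Bq q)) (qmat_mult 2 (I_n1 1) (Bq q)) = I_n1 1"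
  proof -
    have cq: "qcnj 1 = 1" "qcnj 0 = 0" by (simp_all add: quat_eq_iff qcnj_def)
    show ?thesis
    unfolding qmat_mult_def qmat_ct_def I_n1_def Bq_def using assms
    by (auto intro!: ext simp: sum2 less2 cq)
  qed
  show ?thesis unfolding Sp_n1_def qGL_def one_add_one using m 1 2 3 by blast
qed

definition det3 :: "real\<Rightarrow>real\<Rightarrow>real\<Rightarrow>real\<Rightarrow>real\<Rightarrow>real\<Rightarrow>real\<Rightarrow>real\<Rightarrow>real\<Rightarrow>real" where
 "det3 a b c d e f g h i = a*(e*i - f*h) - b*(d*i - f*g) + c*(d*h - e*g)"
definition det4 :: "(nat \<Rightarrow> nat \<Rightarrow> real) \<Rightarrow> real" where
 "det4 M = M 0 0 * det3 (M 1 1) (M 1 2) (M 1 3) (M 2 1) (M 2 2) (M 2 3) (M 3 1) (M 3 2) (M 3 3)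
   - M 0 1 * det3 (M 1 0) (M 1 2) (M 1 3) (M 2 0) (M 2 2) (M 2 3) (M 3 0) (M 3 2) (M 3 3)
   + M 0 2 * det3 (M 1 0) (M 1 1) (M 1 3) (M 2 0) (M 2 1) (M 2 3) (M 3 0) (M 3 1) (M 3 3)
   - M 0 3 * det3 (M 1 0) (M 1 1) (M 1 2) (M 2 0) (M 2 1) (M 2 2) (M 3 0) (M 3 1) (M 3 2)"

lemma det_rank2: "det4 (\<lambda>r s. x r * x s + y r * y s) = 0"
  unfolding det4_def det3_def by (simp add: algebra_simps)

lemma det_id: "det4 (\<lambda>r s. (if r = s then 1/4 else 0) + u r * u s) = (1 + 4*(u 0^2 + u 1^2+u 2^2+u 3^2))/256"
  unfolding det4_def det3_def by (simp add: power2_eq_square; algebra)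

lemma det4_cong: "(\<And>r s. r < 4 \<Longrightarrow> s < 4 \<Longrightarrow> M r s = N r s) \<Longrightarrow> det4 M = det4 N"
  unfolding det4_def by simp

lemma final:
  fixes x y u :: "nat \<Rightarrow> real"
  assumes "\<And>r s. r < 4 \<Longrightarrow> s < 4 \<Longrightarrow> x r * x s + y r * y s - u r * u s = (if r = s then 1/4 else 0)"
  shows False
proof -
  have P: "x r * x s + y r * y s = (if r = s then 1/4 else 0) + u r * u s" if "r < 4" "s < 4" for r s
    using assms[OF that] by linarith
  have "det4 (\<lambda>r s. x r * x s + y r * y s) = det4 (\<lambda>r s. (if r = s then 1/4 else 0) + u r * u s)"
    by (rule det4_cong) (rule P)
  then have "(0::real) = (1 + 4*(u 0^2 + u 1^2+u 2^2+u 3^2))/256" unfolding det_rank2 det_id .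
  moreover have "(1 + 4*(u 0^2 + u 1^2+u 2^2+u 3^2)) > (0::real)" by (simp add: add_pos_nonneg)
  ultimately show False by simp
qed

lemma clean:
  fixes a0 b0 c0 d0 a1 b1 c1 d1 a2 b2 c2 d2 :: real
  assumes h1: "(a0*a0+b0*b0-c0*c0-d0*d0) + (a1*a1+b1*b1-c1*c1-d1*d1) - (a2*a2+b2*b2-c2*c2-d2*d2) = 0"
  and h2: "(b0*c0+a0*d0) + (b1*c1+a1*d1) - (b2*c2+a2*d2) = 0"
  and h3: "(b0*d0-a0*c0) + (b1*d1-a1*c1) - (b2*d2-a2*c2) = 0"
  and h4: "(b0*c0-a0*d0) + (b1*c1-a1*d1) - (b2*c2-a2*d2) = 0"
  and h5: "(a0*a0-b0*b0+c0*c0-d0*d0) + (a1*a1-b1*b1+c1*c1-d1*d1) - (a2*a2-b2*b2+c2*c2-d2*d2) = 0"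
  and h6: "(c0*d0+a0*b0) + (c1*d1+a1*b1) - (c2*d2+a2*b2) = 0"
  and h7: "(b0*d0+a0*c0) + (b1*d1+a1*c1) - (b2*d2+a2*c2) = 0"
  and h8: "(c0*d0-a0*b0) + (c1*d1-a1*b1) - (c2*d2-a2*b2) = 0"
  and h9: "(a0*a0-b0*b0-c0*c0+d0*d0) + (a1*a1-b1*b1-c1*c1+d1*d1) - (a2*a2-b2*b2-c2*c2+d2*d2) = 0"
  and h10: "(a0*a0+b0*b0+c0*c0+d0*d0) + (a1*a1+b1*b1+c1*c1+d1*d1) - (a2*a2+b2*b2+c2*c2+d2*d2) = 1"
  shows False
proof -
  define x where "x = (\<lambda>r::nat. if r = 0 then a0 else if r = 1 then b0 else if r = 2 then c0 else d0)"
  define y where "y = (\<lambda>r::nat. if r = 0 then a1 else if r = 1 then b1 else if r = 2 then c1 else d1)"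
  define u where "u = (\<lambda>r::nat. if r = 0 then a2 else if r = 1 then b2 else if r = 2 then c2 else d2)"
  have S: "a0*b0 + a1*b1 - a2*b2 = 0" using h6 h8 by linarith
  have "a0*c0 + a1*c1 - a2*c2 = 0" using h7 h3 by linarith
  moreover have "a0*d0 + a1*d1 - a2*d2 = 0" using h2 h4 by linarith
  moreover have "b0*c0 + b1*c1 - b2*c2 = 0" using h2 h4 by linarith
  moreover have "b0*d0 + b1*d1 - b2*d2 = 0" using h3 h7 by linarith
  moreover have "c0*d0 + c1*d1 - c2*d2 = 0" using h6 h8 by linarith
  moreover have "a0*a0 + a1*a1 - a2*a2 = 1/4" using h1 h5 h9 h10 by linarith
  moreover have "b0*b0 + b1*b1 - b2*b2 = 1/4" using h1 h5 h9 h10 by linarith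
  moreover have "c0*c0 + c1*c1 - c2*c2 = 1/4" using h1 h5 h9 h10 by linarith
  moreover have "d0*d0 + d1*d1 - d2*d2 = 1/4" using h1 h5 h9 h10 by linarith
  ultimately have S: "a0*b0 + a1*b1 - a2*b2 = 0" "a0*c0 + a1*c1 - a2*c2 = 0" "a0*d0 + a1*d1 - a2*d2 = 0"
    "b0*c0 + b1*c1 - b2*c2 = 0" "b0*d0 + b1*d1 - b2*d2 = 0" "c0*d0 + c1*d1 - c2*d2 = 0"
    "a0*a0 + a1*a1 - a2*a2 = 1/4" "b0*b0 + b1*b1 - b2*b2 = 1/4" "c0*c0 + c1*c1 - c2*c2 = 1/4"
    "d0*d0 + d1*d1 - d2*d2 = 1/4" using S by auto
  have S': "b0*a0 + b1*a1 - b2*a2 = 0" "c0*a0 + c1*a1 - c2*a2 = 0" "d0*a0 + d1*a1 - d2*a2 = 0"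
    "c0*b0 + c1*b1 - c2*b2 = 0" "d0*b0 + d1*b1 - d2*b2 = 0" "d0*c0 + d1*c1 - d2*c2 = 0"
    using S by (simp_all add: mult.commute)
  have less4: "(i::nat) < 4 \<longleftrightarrow> i = 0 \<or> i = 1 \<or> i = 2 \<or> i = 3" for i by auto
  have "x r * x s + y r * y s - u r * u s = (if r = s then 1/4 else 0)" if "r < 4" "s < 4" for r s
    using that unfolding less4 x_def y_def u_def
    by (elim disjE) (simp_all add: S S')
  then show False by (rule final)
qed

definition hq :: "quat \<Rightarrow> qmatrix" where
  "hq q = (\<lambda>i j. if i = 0 \<and> j = 0 then 1
                           else if 1 \<le> i \<and> 1 \<le> j then Bq q (i - 1) (j - 1) else 0)"

lemma hq_in: "q * qcnj q = 1 \<Longrightarrow> qcnj q * q = 1 \<Longrightarrow> hq q \<in> one_plus_Sp11"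
  unfolding one_plus_Sp11_def hq_def using Bq_Sp by blast

lemma inv_eq:
  assumes "g \<in> Sp_n1 2"
  shows "qmat_inv 3 g = qmat_mult 3 (I_n1 2) (qmat_mult 3 (qmat_ct g) (I_n1 2))"
proof -
  define L where "L = qmat_mult 3 (I_n1 2) (qmat_mult 3 (qmat_ct g) (I_n1 2))"
  have gGL: "g \<in> qGL 3" and hs: "qmat_mult 3 (qmat_ct g) (qmat_mult 3 (I_n1 2) g) = I_n1 2"
    using assms unfolding Sp_n1_def by auto
  have ex: "\<exists>B. B \<in> qmats 3 \<and> qmat_mult 3 g B = qmat_id 3 \<and> qmat_mult 3 B g = qmat_id 3"
    using gGL unfolding qGL_def by auto
  have inv: "qmat_inv 3 g \<in> qmats 3" "qmat_mult 3 g (qmat_inv 3 g) = qmat_id 3"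
    using someI_ex[OF ex] unfolding qmat_inv_def by auto
  have II: "qmat_mult 3 (I_n1 2) (I_n1 2) = qmat_id 3"
    unfolding qmat_mult_def I_n1_def qmat_id_def by (auto intro!: ext simp: sum3 less3)
  have Lg: "qmat_mult 3 L g = qmat_id 3"
    unfolding L_def qmat_mult_assoc hs II ..
  have "qmat_inv 3 g = qmat_mult 3 (qmat_id 3) (qmat_inv 3 g)" using inv qmat_mult_id_left by simp
  also have "\<dots> = qmat_mult 3 L (qmat_mult 3 g (qmat_inv 3 g))" unfolding Lg[symmetric] qmat_mult_assoc ..
  also have "\<dots> = L" unfolding inv(2) L_def by (rule qmat_mult_id_right[OF qmat_mult_qmats])
  finally show ?thesis unfolding L_def .
qed

lemma L_entry:
  assumes "i < 3" "j < 3"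
  shows "qmat_mult 3 (I_n1 2) (qmat_mult 3 (qmat_ct g) (I_n1 2)) i j
     = (if i < 2 then 1 else -1) * qcnj (g j i) * (if j < 2 then 1 else -1)"
  using assms unfolding qmat_mult_def I_n1_def qmat_ct_def by (auto simp: sum3 less3)

lemma L_expl: "qmat_mult 3 (I_n1 2) (qmat_mult 3 (qmat_ct g) (I_n1 2)) =
   (\<lambda>i j. if i < 3 \<and> j < 3 then (if i < 2 then 1 else -1) * qcnj (g j i) * (if j < 2 then 1 else -1) else 0)"
proof (rule ext, rule ext)
  fix i j show "qmat_mult 3 (I_n1 2) (qmat_mult 3 (qmat_ct g) (I_n1 2)) i j = (if i < 3 \<and> j < 3 then (if i < 2 then 1 else -1) * qcnj (g j i) * (if j < 2 then 1 else -1) else 0)"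
    using L_entry[of i j g] by (auto simp: qmat_mult_def)
qed

lemma trace_hq:
  assumes "g \<in> Sp_n1 2"
  shows "qtrace 3 (qmat_mult 3 (qmat_mult 3 g (hq q)) (qmat_inv 3 g)) =
    (\<Sum>i<3. (if i < 2 then 1 else -1) * (g i 0 * qcnj (g i 0) + g i 1 * q * qcnj (g i 1) - g i 2 * qcnj (g i 2)))"
  unfolding inv_eq[OF assms] L_expl qtrace_def
  apply (simp add: sum3)
  apply (simp add: qmat_mult_def sum3 hq_def Bq_def)
  done

lemma rng: "z \<in> range quat_of_real \<Longrightarrow> qi z = 0 \<and> qj z = 0 \<and> qk z = 0"
  unfolding quat_of_real_def by auto

theorem lemma4p6:
  assumes "g \<in> Sp_n1 2"
  shows "\<not> (qtrace 3 ` {qmat_mult 3 (qmat_mult 3 g h) (qmat_inv 3 g) | h. h \<in> one_plus_Sp11}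
             \<subseteq> range quat_of_real)"
proof
  assume sub: "qtrace 3 ` {qmat_mult 3 (qmat_mult 3 g h) (qmat_inv 3 g) | h. h \<in> one_plus_Sp11}
             \<subseteq> range quat_of_real"
  have R: "qi (\<Sum>i<3. (if i < 2 then 1 else -1) * (g i 0 * qcnj (g i 0) + g i 1 * q * qcnj (g i 1) - g i 2 * qcnj (g i 2))) = 0 \<and>
           qj (\<Sum>i<3. (if i < 2 then 1 else -1) * (g i 0 * qcnj (g i 0) + g i 1 * q * qcnj (g i 1) - g i 2 * qcnj (g i 2))) = 0 \<and>
           qk (\<Sum>i<3. (if i < 2 then 1 else -1) * (g i 0 * qcnj (g i 0) + g i 1 * q * qcnj (g i 1) - g i 2 * qcnj (g i 2))) = 0"
    if "q * qcnj q = 1" "qcnj q * q = 1" for q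
  proof -
    have "qtrace 3 (qmat_mult 3 (qmat_mult 3 g (hq q)) (qmat_inv 3 g)) \<in> range quat_of_real"
      using sub hq_in[OF that] by blast
    then show ?thesis unfolding trace_hq[OF assms] by (rule rng)
  qed
  have A: "qi (Quat 0 1 0 0) = 1" by simp
  note Ri = R[of "Quat 0 1 0 0", simplified quat_eq_iff, simplified]
  note Rj = R[of "Quat 0 0 1 0", simplified quat_eq_iff, simplified]
  note Rk = R[of "Quat 0 0 0 1", simplified quat_eq_iff, simplified]
  have hs: "qmat_mult 3 (qmat_ct g) (qmat_mult 3 (I_n1 2) g) = I_n1 2"
    using assms unfolding Sp_n1_def by auto
  have H1: "qre (qmat_mult 3 (qmat_ct g) (qmat_mult 3 (I_n1 2) g) 1 1) = 1"
    unfolding hs by (simp add: I_n1_def)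
  note H1' = H1[unfolded qmat_mult_def qmat_ct_def I_n1_def, simplified sum3, simplified]
  note X = Ri Rj Rk H1'[simplified]
  note X = X[simplified sum3, simplified]
  note Y = X(1)[THEN conjunct1] X(1)[THEN conjunct2, THEN conjunct1] X(1)[THEN conjunct2, THEN conjunct2]
      X(2)[THEN conjunct1] X(2)[THEN conjunct2, THEN conjunct1] X(2)[THEN conjunct2, THEN conjunct2]
      X(3)[THEN conjunct1] X(3)[THEN conjunct2, THEN conjunct1] X(3)[THEN conjunct2, THEN conjunct2] X(4)
  show False
    apply (rule clean[of "qre (g 0 (Suc 0))" "qi (g 0 (Suc 0))" "qj (g 0 (Suc 0))" "qk (g 0 (Suc 0))"
       "qre (g 1 (Suc 0))" "qi (g 1 (Suc 0))" "qj (g 1 (Suc 0))" "qk (g 1 (Suc 0))"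
       "qre (g 2 (Suc 0))" "qi (g 2 (Suc 0))" "qj (g 2 (Suc 0))" "qk (g 2 (Suc 0))"])
    using Y(1) apply (simp add: algebra_simps)
    using Y(2) apply (simp add: algebra_simps)
    using Y(3) apply (simp add: algebra_simps)
    using Y(4) apply (simp add: algebra_simps)
    using Y(5) apply (simp add: algebra_simps)
    using Y(6) apply (simp add: algebra_simps)
    using Y(7) apply (simp add: algebra_simps)
    using Y(8) apply (simp add: algebra_simps)
    using Y(9) apply (simp add: algebra_simps)
    using Y(10) apply (simp add: algebra_simps)
    done
qed

end
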